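(* Let $\ell,r$ be integers with $r\ge 2$ and $r+1\le\ell\le 2r-1$, and let $m=m_{r,\ell}$. Define $h(q)=(q)_{r-1}\cdot\bigl(2r-\ell+2(m-q)(\ell-r)\bigr)$ for integers $q\in[0,m]$. Then $h(q)<h(m-1)$ for all integers $q\in[0,m]\setminus\{m-1\}$.
   Context: For an integer $z$ and positive integer $k$, $(z)_k=z(z-1)\cdots(z-k+1)$ if $z>k-1$ and $(z)_k=0$ otherwise. $m_{r,\ell}$ is the unique integer $k\ge r$ maximizing $f(k)=\frac{(k-1)(k-2)\cdots(k-r+1)}{k^{\ell-1}}$ over all integers $k\ge r$. *)

theory Defs
  imports Complex_Main
begin

definition ffact_int :: "int \<Rightarrow> nat \<Rightarrow> int" where
  "ffact_int z k = (if z > int k - 1 then (\<Prod>i<k. z - int i) else 0)"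

definition f_rl :: "int \<Rightarrow> int \<Rightarrow> int \<Rightarrow> real" where
  "f_rl r l k = (\<Prod>i\<in>{1..nat (r - 1)}. real_of_int (k - int i)) / (real_of_int k) ^ nat (l - 1)"

definition m_rl :: "int \<Rightarrow> int \<Rightarrow> int" where
  "m_rl r l = (THE k. k \<ge> r \<and> (\<forall>j. j \<ge> r \<longrightarrow> f_rl r l j \<le> f_rl r l k))"

end

theory Submission
  imports Defs
begin


lemma L1:
  fixes K :: int
  shows "1 \<le> n \<Longrightarrow> int n < K \<Longrightarrow> (K+1)^n * (K - int n) \<le> (K-1)^n * (K + int n)"
proof (induction n rule: nat_induct_at_least)
  case base
  then show ?case by (simp add: algebra_simps)
next
  case (Suc n)
  have st0: "(K-1)*(K+int n+1)*(K-int n) - (K+1)*(K-int n-1)*(K+int n) = 2*(int n*int n + int n)"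
    by (simp add: algebra_simps)
  have st: "(K+1)*(K-int n-1)*(K+int n) < (K-1)*(K+int n+1)*(K-int n)"
  proof -
    define X where "X = (K+1)*(K-int n-1)*(K+int n)"
    define Y where "Y = (K-1)*(K+int n+1)*(K-int n)"
    define Z where "Z = int n * int n"
    have e: "Y - X = 2*(Z + int n)" using st0 unfolding X_def Y_def Z_def .
    have "Z \<ge> 0" "int n \<ge> 1" using Suc(1) unfolding Z_def by auto
    hence "X < Y" using e by arith
    thus ?thesis unfolding X_def Y_def .
  qed
  have pos: "K - int n > 0" using Suc by simp
  have "(K+1)^(Suc n) * (K - int (Suc n)) * (K - int n)
      = ((K+1)^n * (K - int n)) * ((K+1)*(K-int n-1))" by (simp add: algebra_simps)
  also have "\<dots> \<le> ((K-1)^n * (K + int n)) * ((K+1)*(K-int n-1))"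
    using Suc pos by (intro mult_right_mono) auto
  also have "\<dots> = (K-1)^n * ((K+1)*(K-int n-1)*(K+int n))" by (simp add: algebra_simps)
  also have "\<dots> \<le> (K-1)^n * ((K-1)*(K+int n+1)*(K-int n))"
    using st Suc by (intro mult_left_mono) auto
  also have "\<dots> = (K-1)^(Suc n) * (K + int (Suc n)) * (K - int n)" by (simp add: algebra_simps)
  finally show ?case using pos by simp
qed

lemma L2:
  fixes K :: int
  assumes "2 \<le> n" "int n < K"
  shows "(K+1)^n * (K - int n) < (K-1)^n * (K + int n)"
proof -
  obtain m where n: "n = Suc m" and m1: "1 \<le> m" using assms by (cases n) auto
  have ih: "(K+1)^m * (K - int m) \<le> (K-1)^m * (K + int m)" using L1[OF m1] assms n by simp
  have st0: "(K-1)*(K+int m+1)*(K-int m) - (K+1)*(K-int m-1)*(K+int m) = 2*(int m*int m + int m)"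
    by (simp add: algebra_simps)
  have st: "(K+1)*(K-int m-1)*(K+int m) < (K-1)*(K+int m+1)*(K-int m)"
  proof -
    define X where "X = (K+1)*(K-int m-1)*(K+int m)"
    define Y where "Y = (K-1)*(K+int m+1)*(K-int m)"
    define Z where "Z = int m * int m"
    have e: "Y - X = 2*(Z + int m)" using st0 unfolding X_def Y_def Z_def .
    have "Z \<ge> 0" "int m \<ge> 1" using m1 unfolding Z_def by auto
    hence "X < Y" using e by arith
    thus ?thesis unfolding X_def Y_def .
  qed
  have pos: "K - int m > 0" using assms n by simp
  have p2: "(K-1)^m > 0" using assms n by simp
  have "(K+1)^n * (K - int n) * (K - int m)
      = ((K+1)^m * (K - int m)) * ((K+1)*(K-int m-1))" using n by (simp add: algebra_simps)
  also have "\<dots> \<le> ((K-1)^m * (K + int m)) * ((K+1)*(K-int m-1))"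
    using ih assms n by (intro mult_right_mono) auto
  also have "\<dots> = (K-1)^m * ((K+1)*(K-int m-1)*(K+int m))" by (simp add: algebra_simps)
  also have "\<dots> < (K-1)^m * ((K-1)*(K+int m+1)*(K-int m))"
    using st p2 by (intro mult_strict_left_mono) auto
  also have "\<dots> = (K-1)^n * (K + int n) * (K - int m)" using n by (simp add: algebra_simps)
  finally show ?thesis using pos by simp
qed

lemma claimA:
  fixes k s :: int
  assumes "s \<ge> 1" "k \<ge> s+1" "int n \<le> 2*s" "2 \<le> n" "2*(int n - s)*k \<le> s*(int n+1)"
  shows "(k-s)*(k+1)^n < k^(n+1)"
proof -
  have "(2*k+1+1)^n * (2*k+1 - int n) < (2*k+1-1)^n * (2*k+1 + int n)"
    using L2[of n "2*k+1"] assms by simp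
  moreover have "(2*k+1+1)^n = 2^n * (k+1)^n"
    by (metis power_mult_distrib add.assoc one_add_one distrib_left mult.right_neutral)
  moreover have "(2*k+1-1)^n = 2^n * k^n"
    by (simp add: power_mult_distrib)
  ultimately have "2^n * ((k+1)^n * (2*k+1 - int n)) < 2^n * (k^n * (2*k+1 + int n))"
    by (simp only: mult.assoc)
  hence h1: "(k+1)^n * (2*k+1 - int n) < k^n * (2*k+1 + int n)" by simp
  have ks: "k - s > 0" using assms by simp
  have kn: "2*k+1 - int n > 0" using assms by simp
  have h2: "(k-s)*(2*k+1+int n) \<le> k*(2*k+1-int n)" using assms by (simp add: algebra_simps)
  have "(k-s)*(k+1)^n*(2*k+1-int n) = (k-s)*((k+1)^n*(2*k+1-int n))" by simp
  also have "\<dots> < (k-s)*(k^n * (2*k+1 + int n))" using h1 ks by (intro mult_strict_left_mono) auto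
  also have "\<dots> = k^n * ((k-s)*(2*k+1+int n))" by simp
  also have "\<dots> \<le> k^n * (k*(2*k+1-int n))" using h2 assms by (intro mult_left_mono) auto
  also have "\<dots> = k^(n+1) * (2*k+1-int n)" by simp
  finally have "(k-s)*(k+1)^n*(2*k+1-int n) < k^(n+1) * (2*k+1-int n)" .
  thus ?thesis using kn by (simp only: mult_less_cancel_right)
qed



lemma binom3:
  fixes j :: int assumes "j \<ge> 0"
  shows "2*(j+1)^(m+2) \<ge> 2*j^(m+2) + 2*(int m+2)*j^(m+1) + (int m+2)*(int m+1)*j^m"
proof (induction m)
  case 0
  then show ?case by (simp add: power2_eq_square algebra_simps)
next
  case (Suc m)
  have "2*(j+1)^(Suc m+2) = (j+1)*(2*(j+1)^(m+2))" by simp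
  also have "\<dots> \<ge> (j+1)*(2*j^(m+2) + 2*(int m+2)*j^(m+1) + (int m+2)*(int m+1)*j^m)"
    using Suc assms by (intro mult_left_mono) auto
  finally have 1: "2*(j+1)^(Suc m+2) \<ge> (j+1)*(2*j^(m+2) + 2*(int m+2)*j^(m+1) + (int m+2)*(int m+1)*j^m)" .
  define J where "J = j^m"
  have p1: "j^(m+1) = j*J" "j^(m+2) = j*j*J" "j^(Suc m+2) = j*j*j*J" "j^(Suc m+1) = j*j*J"
    "j^(Suc m) = j*J" unfolding J_def by (simp_all add: power_add power2_eq_square)
  have e: "(j+1)*(2*j^(m+2) + 2*(int m+2)*j^(m+1) + (int m+2)*(int m+1)*j^m)
     = 2*j^(Suc m+2) + 2*(int (Suc m)+2)*j^(Suc m+1) + (int (Suc m)+2)*(int (Suc m)+1)*j^(Suc m)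
       + (int m+2)*(int m+1)*j^m"
    unfolding p1 J_def[symmetric] by (simp add: algebra_simps)
  have "(int m+2)*(int m+1)*j^m \<ge> 0" using assms by simp
  then show ?case using 1 e by linarith
qed

lemma claimB:
  fixes j s a :: int
  assumes s1: "s \<ge> 1" and a1: "a \<ge> 1" and nn: "int n = s + a" and js: "j \<ge> s+1"
    and c: "2*a*j \<ge> s*(s+1+3*a)"
  shows "(j-s)*(j+1)^n > j^(n+1)"
proof -
  have n2: "n \<ge> 2" using nn s1 a1 by linarith
  define m where "m = n - 2"
  have m: "n = m+2" using n2 m_def by simp
  define N where "N = int n"
  have N2: "N = int m + 2" using m N_def by simp
  have b: "2*(j+1)^n \<ge> 2*j^n + 2*N*j^(m+1) + N*(N-1)*j^m"
    using binom3[of j m] js s1 m N2 by (simp add: algebra_simps)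
  have E: "2*a*j*j + (N*(N-1) - 2*s*N)*j - s*N*(N-1) > 0"
  proof -
    have t1: "2*a*j - N*(s-a+1) \<ge> a*(3*s+a-1)"
      using c N_def nn by (simp add: algebra_simps)
    have t2: "j*(2*a*j - N*(s-a+1)) \<ge> j*(a*(3*s+a-1))"
      using t1 js s1 by (intro mult_left_mono) auto
    have t3: "2*a*j*(3*s+a-1) \<ge> s*(s+1+3*a)*(3*s+a-1)"
      using c s1 a1 by (intro mult_right_mono) auto
    have t4: "(s+1+3*a)*(3*s+a-1) - 2*(s+a)*(s+a-1) = s*s + 6*a*s + a*a + 4*s - 1"
      by (simp add: algebra_simps)
    have t5: "s*s + 6*a*s + a*a + 4*s - 1 > 0"
    proof -
      have "s*s \<ge> 0" "a*a \<ge> 0" "a*s \<ge> 0" using s1 a1 by auto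
      thus ?thesis using s1 by linarith
    qed
    have t6: "s*((s+1+3*a)*(3*s+a-1)) > s*(2*(s+a)*(s+a-1))"
      using t4 t5 s1 by (intro mult_strict_left_mono) auto
    have t7: "2*(j*(a*(3*s+a-1))) > 2*(s*N*(N-1))"
      using t3 t6 nn N_def by (simp add: algebra_simps)
    have "2*a*j*j + (N*(N-1) - 2*s*N)*j - s*N*(N-1) = j*(2*a*j - N*(s-a+1)) - s*N*(N-1)"
      using nn N_def by (simp add: algebra_simps)
    then show ?thesis using t2 t7 by linarith
  qed
  have jm: "j^m > 0" using js s1 by simp
  have jsp: "j - s > 0" using js by simp
  have "2*((j-s)*(j+1)^n) \<ge> (j-s)*(2*j^n + 2*N*j^(m+1) + N*(N-1)*j^m)"
    using b jsp by (simp add: mult_left_mono)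
  moreover have "(j-s)*(2*j^n + 2*N*j^(m+1) + N*(N-1)*j^m) - 2*j^(n+1)
      = j^m * (2*a*j*j + (N*(N-1) - 2*s*N)*j - s*N*(N-1))"
    using m nn N_def by (simp add: algebra_simps power_add)
  moreover have "j^m * (2*a*j*j + (N*(N-1) - 2*s*N)*j - s*N*(N-1)) > 0"
    using jm E by simp
  ultimately show ?thesis by linarith
qed




lemma psi_mono:
  fixes s x y :: real
  assumes s1: "s \<ge> 1" and n1: "n \<ge> 1" and y0: "0 < y" and yx: "y < x"
    and hx: "(1+x)^n*(1-s*x) > 1"
  shows "(1+y)^n*(1-s*y) > 1"
proof -
  define \<psi> where "\<psi> = (\<lambda>t::real. (1+t)^n*(1-s*t))"
  define d where "d = (\<lambda>t::real. real n*(1+t)^(n-1)*(1-s*t) - s*(1+t)^n)"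
  have D: "DERIV \<psi> t :> d t" for t
    unfolding \<psi>_def d_def
    by (auto intro!: derivative_eq_intros simp: algebra_simps)
  have dform: "d t = (1+t)^(n-1)*((real n - s) - s*(real n+1)*t)" for t
  proof -
    have "(1+t)^n = (1+t)^(n-1)*(1+t)" using n1
      by (metis Suc_diff_1 less_le_trans zero_less_one power_Suc2 n1)
    thus ?thesis unfolding d_def by (simp add: algebra_simps)
  qed
  define t0 where "t0 = (real n - s)/(s*(real n+1))"
  have sp: "s*(real n+1) > 0" using s1 by simp
  show ?thesis
  proof (cases "y < t0")
    case True
    have "\<psi> 0 < \<psi> y"
    proof (rule DERIV_pos_imp_increasing[OF y0])
      fix t assume t: "0 \<le> t" "t \<le> y"
      have "t < t0" using t True by simp
      hence "s*(real n+1)*t < real n - s" using sp unfolding t0_def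
        by (simp add: field_simps)
      hence "d t > 0" using t dform[of t] by simp
      thus "\<exists>z. DERIV \<psi> t :> z \<and> z > 0" using D by blast
    qed
    thus ?thesis unfolding \<psi>_def by simp
  next
    case False
    have "\<psi> x \<le> \<psi> y"
    proof (rule DERIV_nonpos_imp_nonincreasing[of y x \<psi>])
      show "y \<le> x" using yx by simp
      fix t assume t: "y \<le> t" "t \<le> x"
      have "t \<ge> t0" using t False by simp
      hence "s*(real n+1)*t \<ge> real n - s" using sp unfolding t0_def
        by (simp add: field_simps)
      moreover have "(1+t)^(n-1) \<ge> 0" using t y0 by simp
      ultimately have "d t \<le> 0" using dform[of t]
        by (simp add: mult_nonneg_nonpos)
      thus "\<exists>z. DERIV \<psi> t :> z \<and> z \<le> 0" using D by blast
    qed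
    thus ?thesis using hx unfolding \<psi>_def by simp
  qed
qed

lemma conv:
  fixes k s :: real assumes k: "k > 0"
  shows "((1+1/k)^n*(1-s*(1/k)) > 1) = ((k-s)*(k+1)^n > k^(n+1))"
proof -
  have "(1+1/k)^n*(1-s*(1/k)) = ((k-s)*(k+1)^n) / k^(n+1)"
    using k by (simp add: field_simps power_divide)
  moreover have "k^(n+1) > 0" using k by simp
  ultimately show ?thesis by (simp add: pos_less_divide_eq)
qed

lemma unimod:
  fixes k s :: int
  assumes s1: "s \<ge> 1" and n1: "n \<ge> 1" and ks: "k \<ge> s+1"
    and h: "(k-s)*(k+1)^n > k^(n+1)"
  shows "(k+1-s)*(k+2)^n > (k+1)^(n+1)"
proof -
  have k0: "real_of_int k > 0" using ks s1 by simp
  have h': "(real_of_int k - real_of_int s)*(real_of_int k+1)^n > (real_of_int k)^(n+1)"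
    using h by (metis (mono_tags, opaque_lifting) of_int_1 of_int_add of_int_diff of_int_less_iff of_int_mult of_int_power)
  have A: "(1+1/real_of_int k)^n*(1-real_of_int s*(1/real_of_int k)) > 1"
    using conv[OF k0] h' by simp
  have B: "(1+1/(real_of_int k+1))^n*(1-real_of_int s*(1/(real_of_int k+1))) > 1"
    by (rule psi_mono[OF _ n1 _ _ A]) (use s1 k0 in \<open>auto simp: field_simps\<close>)
  have k1: "real_of_int k + 1 > 0" using k0 by simp
  have "(real_of_int k + 1 - real_of_int s)*(real_of_int k+1+1)^n > (real_of_int k+1)^(n+1)"
    using conv[OF k1] B by simp
  hence "real_of_int ((k+1-s)*(k+2)^n) > real_of_int ((k+1)^(n+1))"
    by (simp add: add.assoc)
  thus ?thesis by (simp only: of_int_less_iff)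
qed

lemma noteq:
  fixes k s :: int assumes "k \<ge> 1" "n \<ge> 1"
  shows "(k-s)*(k+1)^n \<noteq> k^(n+1)"
proof
  assume eq: "(k-s)*(k+1)^n = k^(n+1)"
  have "(k+1) dvd (k+1)^n" using assms(2) by (intro dvd_power) auto
  hence "(k+1) dvd (k-s)*(k+1)^n" by (rule dvd_mult)
  hence d: "(k+1) dvd k^(n+1)" using eq by simp
  have "coprime (k+1) k" by simp
  hence "coprime (k+1) (k^(n+1))" by simp
  hence "is_unit (k+1)" using d coprime_common_divisor[of "k+1" "k^(n+1)" "k+1"] by simp
  thus False using assms by (simp add: zdvd1_eq)
qed



lemma Pstep:
  fixes k :: int
  shows "(\<Prod>i\<in>{1..N}. real_of_int (k+1 - int i)) * real_of_int (k - int N)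
       = real_of_int k * (\<Prod>i\<in>{1..N}. real_of_int (k - int i))"
proof (induction N)
  case 0
  then show ?case by simp
next
  case (Suc N)
  have "(\<Prod>i\<in>{1..Suc N}. real_of_int (k+1 - int i)) * real_of_int (k - int (Suc N))
     = ((\<Prod>i\<in>{1..N}. real_of_int (k+1 - int i)) * real_of_int (k - int N)) * real_of_int (k - int (Suc N))"
    by (simp add: prod.cl_ivl_Suc)
  also have "\<dots> = real_of_int k * ((\<Prod>i\<in>{1..N}. real_of_int (k - int i)) * real_of_int (k - int (Suc N)))"
    using Suc by simp
  also have "\<dots> = real_of_int k * (\<Prod>i\<in>{1..Suc N}. real_of_int (k - int i))"
    by (simp add: prod.cl_ivl_Suc)
  finally show ?case .
qed

lemma Ppos:
  fixes k :: int assumes "k \<ge> int N + 1"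
  shows "(\<Prod>i\<in>{1..N}. real_of_int (k - int i)) > 0"
  using assms by (intro prod_pos) auto

lemma Fstep:
  fixes q :: int
  shows "(\<Prod>i<N. (q+1 - int i)) * (q + 1 - int N) = (q+1) * (\<Prod>i<N. (q - int i))"
proof (induction N)
  case 0
  then show ?case by simp
next
  case (Suc N)
  have "(\<Prod>i<Suc N. (q+1 - int i)) * (q + 1 - int (Suc N))
      = ((\<Prod>i<N. (q+1 - int i)) * (q + 1 - int N)) * (q - int N)" by simp
  also have "\<dots> = (q+1) * ((\<Prod>i<N. (q - int i)) * (q - int N))" using Suc by simp
  also have "\<dots> = (q+1) * (\<Prod>i<Suc N. (q - int i))" by simp
  finally show ?case .
qed

lemma Fpos:
  fixes q :: int assumes "q \<ge> int N"
  shows "(\<Prod>i<N. (q - int i)) > 0"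
  using assms by (intro prod_pos) auto

lemma fstep:
  assumes r2: "r \<ge> 2" and kr: "k \<ge> r"
  shows "f_rl r l (k+1) * real_of_int ((k-(r-1))*(k+1)^nat(l-1)) = f_rl r l k * real_of_int (k^(nat(l-1)+1))"
    and "f_rl r l k > 0"
proof -
  define N where "N = nat (r-1)"
  define n where "n = nat (l-1)"
  have NN: "int N = r - 1" using r2 N_def by simp
  define P where "P = (\<lambda>k. \<Prod>i\<in>{1..N}. real_of_int (k - int i))"
  have fk: "f_rl r l k = P k / (real_of_int k)^n" for k
    unfolding f_rl_def P_def N_def n_def by simp
  have fk1: "f_rl r l (k+1) = (\<Prod>i\<in>{1..N}. real_of_int (k+1 - int i)) / (real_of_int k + 1)^n"
    unfolding f_rl_def N_def n_def by simp
  have k0: "real_of_int k > 0" using kr r2 by simp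
  have NR: "real N = real_of_int r - 1"
  proof -
    have "real_of_int (int N) = real_of_int (r-1)" using NN by simp
    thus ?thesis by simp
  qed
  have pp: "P k > 0" unfolding P_def using kr NN by (intro Ppos) simp
  show "f_rl r l k > 0" using fk pp k0 by simp
  have "f_rl r l (k+1) * real_of_int ((k-(r-1))*(k+1)^nat(l-1))
      = (\<Prod>i\<in>{1..N}. real_of_int (k+1 - int i)) * real_of_int (k - int N)"
  proof -
    have e1: "f_rl r l (k+1) * (real_of_int k + 1)^n = (\<Prod>i\<in>{1..N}. real_of_int (k+1 - int i))"
      using fk1 k0 by (simp add: field_simps)
    have e2: "real_of_int ((k-(r-1))*(k+1)^n) = (real_of_int k + 1)^n * real_of_int (k - int N)"
      using NN by simp
    show ?thesis unfolding n_def[symmetric] e2 using e1 by (simp only: mult.assoc[symmetric])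
  qed
  also have "\<dots> = real_of_int k * P k" unfolding P_def by (rule Pstep)
  also have "\<dots> = f_rl r l k * real_of_int (k^(nat(l-1)+1))"
    using fk k0 unfolding n_def[symmetric] by (simp add: field_simps)
  finally show "f_rl r l (k+1) * real_of_int ((k-(r-1))*(k+1)^nat(l-1)) = f_rl r l k * real_of_int (k^(nat(l-1)+1))" .
qed

lemma cmp:
  fixes A B X Y :: real
  assumes "A > 0" "X > 0" "Y > 0" "B * X = A * Y"
  shows "(B < A \<longleftrightarrow> Y < X) \<and> (A < B \<longleftrightarrow> X < Y)"
proof -
  have B: "B = A * Y / X" using assms by (simp add: field_simps)
  show ?thesis unfolding B using assms by (simp add: field_simps)
qed

lemma fcmp:
  assumes r2: "r \<ge> 2" and kr: "k \<ge> r"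
  shows "(f_rl r l (k+1) < f_rl r l k \<longleftrightarrow> (k-(r-1))*(k+1)^nat(l-1) > k^(nat(l-1)+1))
       \<and> (f_rl r l k < f_rl r l (k+1) \<longleftrightarrow> (k-(r-1))*(k+1)^nat(l-1) < k^(nat(l-1)+1))"
proof -
  have X: "real_of_int ((k-(r-1))*(k+1)^nat(l-1)) > 0" using kr r2 by simp
  have Y: "real_of_int (k^(nat(l-1)+1)) > 0" using kr r2 by simp
  from cmp[OF fstep(2)[OF r2 kr] X Y fstep(1)[OF r2 kr]] show ?thesis
    by (simp only: of_int_less_iff)
qed


theorem lemma4p3:
  fixes l r :: int
  assumes "r \<ge> 2" and "r + 1 \<le> l" and "l \<le> 2 * r - 1"
  defines "m \<equiv> m_rl r l"
  defines "h \<equiv> (\<lambda>q::int. ffact_int q (nat (r - 1)) * (2 * r - l + 2 * (m - q) * (l - r)))"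
  shows "\<forall>q::int. 0 \<le> q \<and> q \<le> m \<and> q \<noteq> m - 1 \<longrightarrow> h q < h (m - 1)"
proof -
  note r2 = assms(1)
  define n where "n = nat (l-1)"
  define a where "a = l - r"
  define D where "D = (\<lambda>j::int. (j-(r-1))*(j+1)^n - j^(n+1))"
  have n_int: "int n = l - 1" using assms by (simp add: n_def)
  have n2: "n \<ge> 2" using assms n_int by linarith
  have a1: "a \<ge> 1" "a \<le> r - 1" using assms a_def by auto
  have F1: "(f_rl r l (k+1) < f_rl r l k \<longleftrightarrow> D k > 0) \<and> (f_rl r l k < f_rl r l (k+1) \<longleftrightarrow> D k < 0)"
    if "k \<ge> r" for k
    using fcmp[OF r2 that, of l] unfolding D_def n_def by simp
  have NE: "D k \<noteq> 0" if "k \<ge> r" for k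
    using noteq[of k n "r-1"] that r2 n2 unfolding D_def by simp
  have U: "D (k+1) > 0" if "k \<ge> r" "D k > 0" for k
  proof -
    have "(k+1-(r-1))*(k+2)^n > (k+1)^(n+1)"
      using unimod[of "r-1" n k] that r2 n2 unfolding D_def by simp
    thus ?thesis unfolding D_def by (simp add: add.assoc)
  qed
  define K0 where "K0 = r*(r+3*a)"
  have rp: "r + 3*a > 0" using a1 r2 by simp
  have K0r: "K0 \<ge> r" unfolding K0_def using rp r2
    by (metis mult.right_neutral mult_left_mono order_le_less_trans less_le_trans zero_less_one
        int_one_le_iff_zero_less order.trans order_le_less zero_le_numeral)
  have DK0: "D K0 > 0"
  proof -
    have c1: "(r-1)*(r+3*a) \<le> K0" unfolding K0_def using rp by (intro mult_right_mono) auto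
    have c2: "K0 \<le> 2*a*K0" using a1 K0r r2 by (simp add: mult_right_mono)
    have p1: "r - 1 \<ge> 1" using r2 by simp
    have p2: "int n = (r-1) + a" using n_int a_def by simp
    have p3: "K0 \<ge> (r-1)+1" using K0r by simp
    have p4: "2*a*K0 \<ge> (r-1)*((r-1)+1+3*a)" using c1 c2 by simp
    have "(K0-(r-1))*(K0+1)^n > K0^(n+1)"
      by (rule claimB[OF p1 a1(1) p2 p3 p4])
    thus ?thesis unfolding D_def by simp
  qed
  define T where "T = (LEAST t. D (r + int t) > 0)"
  define K where "K = r + int T"
  have ex: "D (r + int (nat (K0 - r))) > 0" using DK0 K0r by simp
  have DK: "D K > 0" unfolding K_def T_def by (rule LeastI[of _ "nat (K0 - r)"], rule ex)
  have Kr: "K \<ge> r" unfolding K_def by simp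
  have below: "D j < 0" if "r \<le> j" "j < K" for j
  proof -
    have "nat (j - r) < T" using that K_def by simp
    hence "\<not> D (r + int (nat (j - r))) > 0" unfolding T_def by (rule not_less_Least)
    hence "\<not> D j > 0" using that by simp
    thus ?thesis using NE[of j] that by simp
  qed
  have above: "D (K + int t) > 0" for t
  proof (induction t)
    case 0 then show ?case using DK by simp
  next
    case (Suc t)
    have "D ((K + int t) + 1) > 0" using U[of "K + int t"] Suc Kr by simp
    moreover have "(K + int t) + 1 = K + int (Suc t)" by simp
    ultimately show ?case by metis
  qed
  have dec: "f_rl r l (K + int (Suc t)) < f_rl r l K" for t
  proof (induction t)
    case 0 then show ?case using F1[OF Kr] DK by simp
  next
    case (Suc t)
    have "f_rl r l ((K + int (Suc t)) + 1) < f_rl r l (K + int (Suc t))"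
      using F1[of "K + int (Suc t)"] above[of "Suc t"] Kr by simp
    moreover have "(K + int (Suc t)) + 1 = K + int (Suc (Suc t))" by simp
    ultimately show ?case using Suc by (metis order.strict_trans)
  qed
  have inc: "f_rl r l (K - int (Suc t)) < f_rl r l K" if "K - int (Suc t) \<ge> r" for t
    using that
  proof (induction t)
    case 0
    have "f_rl r l (K - 1) < f_rl r l ((K - 1) + 1)"
      using F1[of "K-1"] below[of "K-1"] 0 by simp
    then show ?case by simp
  next
    case (Suc t)
    have ih: "f_rl r l (K - int (Suc t)) < f_rl r l K" using Suc by simp
    have "f_rl r l (K - int (Suc (Suc t))) < f_rl r l ((K - int (Suc (Suc t))) + 1)"
      using F1[of "K - int (Suc (Suc t))"] below[of "K - int (Suc (Suc t))"] Suc.prems by simp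
    moreover have "(K - int (Suc (Suc t))) + 1 = K - int (Suc t)" by simp
    ultimately show ?case using ih by (metis order.strict_trans)
  qed
  have maxK: "f_rl r l j < f_rl r l K" if "j \<ge> r" "j \<noteq> K" for j
  proof (cases "j > K")
    case True
    have "j = K + int (Suc (nat (j - K - 1)))" using True by simp
    then show ?thesis using dec by metis
  next
    case False
    hence jK: "j = K - int (Suc (nat (K - j - 1)))" using that by simp
    then show ?thesis using inc[of "nat (K - j - 1)"] that by simp
  qed
  have mK: "m = K" unfolding m_def m_rl_def
  proof (rule the_equality)
    show "K \<ge> r \<and> (\<forall>j. j \<ge> r \<longrightarrow> f_rl r l j \<le> f_rl r l K)"
      using Kr maxK by (metis order_le_less)
    fix k assume k: "k \<ge> r \<and> (\<forall>j. j \<ge> r \<longrightarrow> f_rl r l j \<le> f_rl r l k)"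
    show "k = K"
    proof (rule ccontr)
      assume "k \<noteq> K"
      hence "f_rl r l k < f_rl r l K" using maxK k by simp
      thus False using k Kr by force
    qed
  qed
  have Dm: "D m > 0" using DK mK by simp
  have mr: "m \<ge> r" using Kr mK by simp
  have A2: "2*a*m > (r-1)*l"
  proof (rule ccontr)
    assume "\<not> ?thesis"
    hence c: "2*(int n - (r-1))*m \<le> (r-1)*(int n+1)" using n_int a_def by simp
    have "(m-(r-1))*(m+1)^n < m^(n+1)"
      using claimA[of "r-1" m n] r2 mr n_int assms(3) n2 c by simp
    thus False using Dm unfolding D_def by simp
  qed
  have B2: "2*a*(m-1) < (r-1)*(r+3*a)"
  proof (cases "m = r")
    case True
    have "(r-1)*(2*a) < (r-1)*(r+3*a)" using r2 a1 by (intro mult_strict_left_mono) auto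
    then show ?thesis using True by (simp add: algebra_simps)
  next
    case False
    hence m1: "m - 1 \<ge> r" using mr by simp
    have "D (m-1) < 0" using below[of "m-1"] m1 mK by simp
    show ?thesis
    proof (rule ccontr)
      assume "\<not> ?thesis"
      hence c: "2*a*(m-1) \<ge> (r-1)*((r-1)+1+3*a)" by simp
      have "((m-1)-(r-1))*((m-1)+1)^n > (m-1)^(n+1)"
        using claimB[of "r-1" a n "m-1"] a1 r2 n_int a_def m1 c by simp
      thus False using \<open>D (m-1) < 0\<close> unfolding D_def by simp
    qed
  qed
  define N where "N = nat (r-1)"
  have NN: "int N = r - 1" using r2 N_def by simp
  define F where "F = (\<lambda>q. ffact_int q N)"
  have Fd: "F q = (\<Prod>i<N. (q - int i))" if "q \<ge> int N" for q
    using that unfolding F_def ffact_int_def by simp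
  have F0: "F q = 0" if "q < int N" for q
    using that unfolding F_def ffact_int_def by simp
  have Fst: "F (q+1) * (q+1-int N) = (q+1) * F q" if "q \<ge> int N" for q
    using Fd[of q] Fd[of "q+1"] that Fstep[where N=N and q=q] by simp
  have Fp: "F q > 0" if "q \<ge> int N" for q
    using Fd[OF that] Fpos[OF that] by simp
  have hF: "h q = F q * (2 * r - l + 2 * (m - q) * a)" for q
    unfolding h_def F_def N_def a_def by simp
  have hm1: "h (m-1) = F (m-1) * l" using hF[of "m-1"] a_def by simp
  have hm1p: "h (m-1) > 0" unfolding hm1 using Fp[of "m-1"] NN mr assms by simp
  have step: "h q < h (q+1)" if q1: "int N \<le> q" and q2: "q \<le> m-2" for q
  proof -
    define c where "c = 2 * r - l + 2 * (m - q) * a"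
    define w where "w = q + 1 - int N"
    have w0: "w > 0" using q1 w_def by simp
    have hq: "h q = F q * c" using hF c_def by simp
    have e: "2 * r - l + 2 * (m - (q+1)) * a = c - 2*a" unfolding c_def by (simp add: algebra_simps)
    have hq1: "h (q+1) = F (q+1) * (c - 2*a)" using hF[of "q+1"] e by simp
    have t1: "2*a*(q+1) \<le> 2*a*(m-1)" using q2 a1 by simp
    have t2: "2*(m-q)*a \<ge> 4*a" using q2 a1 by simp
    have t3: "(r-1)*(r+3*a) \<le> (r-1)*c"
      using t2 r2 a_def unfolding c_def by (intro mult_left_mono) auto
    have key0: "2*a*(q+1) < (r-1)*c" using t1 t3 B2 by linarith
    have key: "2*a*(q+1) < c*int N" using key0 NN by (simp add: mult.commute)
    have key2: "c*w < (q+1)*(c-2*a)" using key unfolding w_def by (simp add: algebra_simps)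
    have "F q * (c*w) < F q * ((q+1)*(c-2*a))"
      using key2 Fp[OF q1] by (intro mult_strict_left_mono) auto
    also have "\<dots> = F (q+1) * w * (c - 2*a)" using Fst[OF q1] unfolding w_def by simp
    finally have "(F q * c) * w < (F (q+1) * (c - 2*a)) * w" by (simp add: algebra_simps)
    hence "F q * c < F (q+1) * (c - 2*a)" using w0 by simp
    thus ?thesis using hq hq1 by simp
  qed
  have chain: "h (m-2-int t) < h (m-1)" if "int N \<le> m-2-int t" for t
    using that
  proof (induction t)
    case 0
    have "h (m-2) < h ((m-2)+1)" using step[of "m-2"] 0 by simp
    then show ?case by simp
  next
    case (Suc t)
    have ih: "h (m-2-int t) < h (m-1)" using Suc by simp
    have "h (m-2-int (Suc t)) < h ((m-2-int (Suc t))+1)" using step[of "m-2-int (Suc t)"] Suc.prems by simp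
    moreover have "(m-2-int (Suc t))+1 = m-2-int t" by simp
    ultimately show ?case using ih by (metis order.strict_trans)
  qed
  have hm: "h m < h (m-1)"
  proof -
    have wm: "m - int N > 0" using mr NN by simp
    have Fm: "F m * (m - int N) = m * F (m-1)" using Fst[of "m-1"] mr NN by simp
    have hmv: "h m = F m * (2*r - l)" using hF[of m] by simp
    have k0: "l*(m-(r-1)) - m*(2*r-l) = 2*(l-r)*m - (r-1)*l" by (simp add: algebra_simps)
    have k1: "m*(2*r-l) < l*(m - int N)" using k0 A2 NN unfolding a_def by simp
    have "F m * (2*r-l) * (m - int N) = (F m * (m - int N)) * (2*r-l)" by (simp only: ac_simps)
    also have "\<dots> = F (m-1) * (m*(2*r-l))" unfolding Fm by (simp only: ac_simps)
    also have "\<dots> < F (m-1) * (l*(m - int N))"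
      using k1 Fp[of "m-1"] mr NN by (intro mult_strict_left_mono) auto
    finally have "(F m * (2*r-l)) * (m - int N) < (F (m-1) * l) * (m - int N)" by (simp add: algebra_simps)
    hence "F m * (2*r-l) < F (m-1) * l" using wm by simp
    thus ?thesis using hmv hm1 by simp
  qed
  show ?thesis
  proof (intro allI impI)
    fix q assume q: "0 \<le> q \<and> q \<le> m \<and> q \<noteq> m - 1"
    show "h q < h (m-1)"
    proof (cases "q < int N")
      case True
      then show ?thesis using hF[of q] F0[OF True] hm1p by simp
    next
      case False
      show ?thesis
      proof (cases "q = m")
        case True then show ?thesis using hm by simp
      next
        case False2: False
        have "q = m-2-int (nat (m-2-q))" using q False2 by simp
        then show ?thesis using chain[of "nat (m-2-q)"] False q by (metis not_less)
      qed
    qed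
  qed
qed


end
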